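(* For every $\mathrm{CCS}^-$ process $P$ that is not divergent and every $P'$ with $P\xrightarrow{\tau}P'$, we have $P\not\sim P'$.
   Context: $\mathrm{CCS}^-$ (CCScore without restriction) processes are given by the grammar $P,Q ::= 0 \mid a.P \mid \overline{a}.P \mid P\,|\,Q \mid\ !P$, where $a$ ranges over an infinite set of names. Actions are inputs $a$, outputs $\overline{a}$ (visible actions) and $\tau$. Transitions: $a.P \xrightarrow{a} P$; $\overline{a}.P \xrightarrow{\overline{a}} P$; if $P\xrightarrow{\gamma}P'$ then $P|Q\xrightarrow{\gamma}P'|Q$ and $Q|P\xrightarrow{\gamma}Q|P'$; if $P\xrightarrow{\overline a}P'$ and $Q\xrightarrow{a}Q'$ then $P|Q\xrightarrow{\tau}P'|Q'$ and $Q|P\xrightarrow{\tau}Q'|P'$; if $P\xrightarrow{\gamma}P'$ then $!P\xrightarrow{\gamma}P'\,|\,!P$; if $P\xrightarrow{a}P'$ and $P\xrightarrow{\overline a}P''$ then $!P\xrightarrow{\tau}P'|P''|\,!P$. A process is divergent if it has an infinite sequence of $\tau$-transitions; a relation $\mathcal R$ is divergence-sensitive if $P\,\mathcal R\,Q$ implies ($P$ divergent iff $Q$ divergent). Strong bisimilarity $\sim$ is the union of all symmetric divergence-sensitive relations $\mathcal R$ such that $P\,\mathcal R\,Q$ and $P\xrightarrow{\alpha}P'$ imply $Q\xrightarrow{\alpha}Q'$ for some $Q'$ with $P'\,\mathcal R\,Q'$. *)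

theory Defs
  imports Main
begin

datatype 'n proc =
    Nil
  | In 'n "'n proc"
  | Out 'n "'n proc"
  | Par "'n proc" "'n proc"
  | Bang "'n proc"

datatype 'n act = AIn 'n | AOut 'n | Tau

inductive step :: "'n proc \<Rightarrow> 'n act \<Rightarrow> 'n proc \<Rightarrow> bool" where
  t_in:   "step (In a P) (AIn a) P"
| t_out:  "step (Out a P) (AOut a) P"
| t_parL: "step P g P' \<Longrightarrow> step (Par P Q) g (Par P' Q)"
| t_parR: "step P g P' \<Longrightarrow> step (Par Q P) g (Par Q P')"
| t_comL: "step P (AOut a) P' \<Longrightarrow> step Q (AIn a) Q' \<Longrightarrow> step (Par P Q) Tau (Par P' Q')"
| t_comR: "step P (AOut a) P' \<Longrightarrow> step Q (AIn a) Q' \<Longrightarrow> step (Par Q P) Tau (Par Q' P')"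
| t_bang: "step P g P' \<Longrightarrow> step (Bang P) g (Par P' (Bang P))"
| t_bangcom: "step P (AIn a) P' \<Longrightarrow> step P (AOut a) P'' \<Longrightarrow>
              step (Bang P) Tau (Par (Par P' P'') (Bang P))"

definition divergent :: "'n proc \<Rightarrow> bool" where
  "divergent P \<longleftrightarrow> (\<exists>f :: nat \<Rightarrow> 'n proc. f 0 = P \<and> (\<forall>i. step (f i) Tau (f (Suc i))))"

definition div_sensitive :: "('n proc \<Rightarrow> 'n proc \<Rightarrow> bool) \<Rightarrow> bool" where
  "div_sensitive R \<longleftrightarrow> (\<forall>P Q. R P Q \<longrightarrow> (divergent P \<longleftrightarrow> divergent Q))"

definition strong_bisim :: "('n proc \<Rightarrow> 'n proc \<Rightarrow> bool) \<Rightarrow> bool" where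
  "strong_bisim R \<longleftrightarrow> symp R \<and> div_sensitive R \<and>
     (\<forall>P Q \<alpha> P'. R P Q \<and> step P \<alpha> P' \<longrightarrow> (\<exists>Q'. step Q \<alpha> Q' \<and> R P' Q'))"

definition bisimilar :: "'n proc \<Rightarrow> 'n proc \<Rightarrow> bool" (infix "\<sim>\<^sub>s" 50) where
  "P \<sim>\<^sub>s Q \<longleftrightarrow> (\<exists>R. strong_bisim R \<and> R P Q)"

end

theory Submission
  imports Defs
begin

theorem mainTheorem9:
  fixes P P' :: "'n proc"
  assumes "infinite (UNIV :: 'n set)"
    and "\<not> divergent P"
    and "step P Tau P'"
  shows "\<not> (P \<sim>\<^sub>s P')"
proof
  assume "P \<sim>\<^sub>s P'"
  then obtain R where sb: "strong_bisim R" and r: "R P P'" by (auto simp: bisimilar_def)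
  define S where "S = {X. \<exists>Y. R X Y \<and> step X Tau Y}"
  have succ: "\<exists>Y. step X Tau Y \<and> Y \<in> S" if "X \<in> S" for X
  proof -
    from that obtain Y where "R X Y" "step X Tau Y" by (auto simp: S_def)
    moreover then obtain Y' where "step Y Tau Y'" "R Y Y'"
      using sb unfolding strong_bisim_def by blast
    ultimately show ?thesis by (auto simp: S_def)
  qed
  define g where "g = (\<lambda>X. SOME Y. step X Tau Y \<and> Y \<in> S)"
  have g: "step X Tau (g X) \<and> g X \<in> S" if "X \<in> S" for X
    unfolding g_def using someI_ex[OF succ[OF that]] .
  define f where "f n = (g ^^ n) P" for n
  have P: "P \<in> S" using r assms(3) by (auto simp: S_def)
  have fS: "f n \<in> S" for n
    by (induction n) (auto simp: f_def P g)
  have "\<forall>i. step (f i) Tau (f (Suc i))"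
    using g fS by (simp add: f_def)
  moreover have "f 0 = P" by (simp add: f_def)
  ultimately have "divergent P" unfolding divergent_def by blast
  with assms(2) show False by simp
qed

end
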